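(* Let $\kappa\ge 0$. Suppose $\bar{\mathbf x}\in\mathbf X$ satisfies $$\sum_{a\in\mathcal A}\sum_{w\in\mathcal W}\bar\lambda^w_a\, t_a(\bar{\mathbf v})\,(x^w_a-\bar x^w_a)\ \ge\ 0\qquad\text{for all }\mathbf x\in\mathbf X,$$ where $\bar v_a=\sum_{w\in\mathcal W}\bar x^w_a$, for some constants $\bar\lambda^w_a\in[\tfrac{1}{1+\kappa},1]$ ($w\in\mathcal W$, $a\in\mathcal A$). Then every path flow $\bar{\mathbf f}\in\mathbf F$ with $\bar x^w_a=\sum_{p\in\mathcal P_w}\delta^p_a\bar f_p$ for all $a\in\mathcal A$, $w\in\mathcal W$ is a $\kappa$-multiplicative satisficing user equilibrium ($\kappa$-MSatUE).
   Context: Let $G=(\mathcal N,\mathcal A)$ be a finite directed graph and $\mathcal W$ a finite set of origin–destination (OD) pairs; each $w\in\mathcal W$ has a demand $Q_w>0$ and a finite set $\mathcal P_w$ of paths from its origin to its destination; $\mathcal P=\bigcup_{w}\mathcal P_w$. Let $\delta^p_a=1$ if arc $a$ lies on path $p$ and $0$ otherwise. The feasible path flows are $\mathbf F=\{\mathbf f\ge 0:\sum_{p\in\mathcal P_w}f_p=Q_w\ \forall w\in\mathcal W\}$. A path flow $\mathbf f$ determines arc flows $v_a=\sum_{p\in\mathcal P}\delta^p_af_p$ (the set of these is $\mathbf V$) and OD-specific arc flows $x^w_a=\sum_{p\in\mathcal P_w}\delta^p_af_p$ (the set of these is $\mathbf X$); note $v_a=\sum_w x^w_a$. Each arc $a$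 has a travel time function $t_a(\mathbf v)$ of the arc-flow vector. The path travel time is $c_p(\mathbf f)=\sum_{a\in\mathcal A}\delta^p_a t_a(\mathbf v)$, where $\mathbf v$ is the arc flow induced by $\mathbf f$. For $\kappa\ge0$, a flow $\mathbf f\in\mathbf F$ is a $\kappa$-MSatUE if for every $w\in\mathcal W$ and $p\in\mathcal P_w$: $f_p>0\implies c_p(\mathbf f)\le(1+\kappa)\min_{p'\in\mathcal P_w}c_{p'}(\mathbf f)$. *)

theory Defs
  imports Complex_Main
begin

text \<open>Abstract network: arcs of type 'a (arc set A), OD pairs of type 'w (set W),
  paths of type 'p; P w is the path set of OD pair w; arcs_of p is the set of arcs on
  path p (so delta^p_a = 1 iff a \<in> arcs_of p). Q w is the demand.
  t a v is the travel time of arc a at arc-flow vector v :: 'a \<Rightarrow> real.\<close>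

definition delta :: "('p \<Rightarrow> 'a set) \<Rightarrow> 'p \<Rightarrow> 'a \<Rightarrow> real" where
  "delta arcs_of p a = (if a \<in> arcs_of p then 1 else 0)"

definition feasible_flows ::
  "'w set \<Rightarrow> ('w \<Rightarrow> 'p set) \<Rightarrow> ('w \<Rightarrow> real) \<Rightarrow> ('p \<Rightarrow> real) set" where
  "feasible_flows W P Q = {f. (\<forall>p\<in>(\<Union>w\<in>W. P w). f p \<ge> 0) \<and> (\<forall>w\<in>W. (\<Sum>p\<in>P w. f p) = Q w)}"

definition od_arc_flow ::
  "('w \<Rightarrow> 'p set) \<Rightarrow> ('p \<Rightarrow> 'a set) \<Rightarrow> ('p \<Rightarrow> real) \<Rightarrow> 'w \<Rightarrow> 'a \<Rightarrow> real" where
  "od_arc_flow P arcs_of f w a = (\<Sum>p\<in>P w. delta arcs_of p a * f p)"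

definition arc_flow ::
  "'w set \<Rightarrow> ('w \<Rightarrow> 'p set) \<Rightarrow> ('p \<Rightarrow> 'a set) \<Rightarrow> ('p \<Rightarrow> real) \<Rightarrow> 'a \<Rightarrow> real" where
  "arc_flow W P arcs_of f a = (\<Sum>p\<in>(\<Union>w\<in>W. P w). delta arcs_of p a * f p)"

definition od_flow_set ::
  "'w set \<Rightarrow> ('w \<Rightarrow> 'p set) \<Rightarrow> ('w \<Rightarrow> real) \<Rightarrow> ('p \<Rightarrow> 'a set) \<Rightarrow> ('w \<Rightarrow> 'a \<Rightarrow> real) set" where
  "od_flow_set W P Q arcs_of = {od_arc_flow P arcs_of f | f. f \<in> feasible_flows W P Q}"

definition path_cost ::
  "'a set \<Rightarrow> 'w set \<Rightarrow> ('w \<Rightarrow> 'p set) \<Rightarrow> ('p \<Rightarrow> 'a set) \<Rightarrow> ('a \<Rightarrow> ('a \<Rightarrow> real) \<Rightarrow> real)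
    \<Rightarrow> ('p \<Rightarrow> real) \<Rightarrow> 'p \<Rightarrow> real" where
  "path_cost A W P arcs_of t f p = (\<Sum>a\<in>A. delta arcs_of p a * t a (arc_flow W P arcs_of f))"

definition MSatUE ::
  "real \<Rightarrow> 'a set \<Rightarrow> 'w set \<Rightarrow> ('w \<Rightarrow> 'p set) \<Rightarrow> ('w \<Rightarrow> real) \<Rightarrow> ('p \<Rightarrow> 'a set)
    \<Rightarrow> ('a \<Rightarrow> ('a \<Rightarrow> real) \<Rightarrow> real) \<Rightarrow> ('p \<Rightarrow> real) \<Rightarrow> bool" where
  "MSatUE \<kappa> A W P Q arcs_of t f \<longleftrightarrow>
     f \<in> feasible_flows W P Q \<and>
     (\<forall>w\<in>W. \<forall>p\<in>P w. f p > 0 \<longrightarrow>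
        path_cost A W P arcs_of t f p \<le> (1 + \<kappa>) * (MIN p'\<in>P w. path_cost A W P arcs_of t f p'))"

end

theory Submission
  imports Defs
begin

theorem lemma1:
  fixes A :: "'a set" and W :: "'w set" and P :: "'w \<Rightarrow> 'p set"
    and Q :: "'w \<Rightarrow> real" and arcs_of :: "'p \<Rightarrow> 'a set"
    and t :: "'a \<Rightarrow> ('a \<Rightarrow> real) \<Rightarrow> real"
    and \<kappa> :: real and xbar :: "'w \<Rightarrow> 'a \<Rightarrow> real" and lambar :: "'w \<Rightarrow> 'a \<Rightarrow> real"
    and fbar :: "'p \<Rightarrow> real"
  assumes finA: "finite A" and finW: "finite W"
    and finP: "\<And>w. w \<in> W \<Longrightarrow> finite (P w)"
    and disjP: "\<And>w w'. w \<in> W \<Longrightarrow> w' \<in> W \<Longrightarrow> w \<noteq> w' \<Longrightarrow> P w \<inter> P w' = {}"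
    and arcs_in: "\<And>w p. w \<in> W \<Longrightarrow> p \<in> P w \<Longrightarrow> arcs_of p \<subseteq> A"
    and Qpos: "\<And>w. w \<in> W \<Longrightarrow> Q w > 0"
    and t_nonneg: "\<And>a v. a \<in> A \<Longrightarrow> t a v \<ge> 0"
    and kappa: "\<kappa> \<ge> 0"
    and lam: "\<And>w a. w \<in> W \<Longrightarrow> a \<in> A \<Longrightarrow> 1 / (1 + \<kappa>) \<le> lambar w a \<and> lambar w a \<le> 1"
    and xbar_in: "xbar \<in> od_flow_set W P Q arcs_of"
    and VI: "\<And>x. x \<in> od_flow_set W P Q arcs_of \<Longrightarrow>
        (\<Sum>a\<in>A. \<Sum>w\<in>W. lambar w a * t a (\<lambda>b. \<Sum>w'\<in>W. xbar w' b) * (x w a - xbar w a)) \<ge> 0"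
    and fbar_in: "fbar \<in> feasible_flows W P Q"
    and fbar_x: "\<And>a w. a \<in> A \<Longrightarrow> w \<in> W \<Longrightarrow> xbar w a = (\<Sum>p\<in>P w. delta arcs_of p a * fbar p)"
  shows "MSatUE \<kappa> A W P Q arcs_of t fbar"
proof -
  define T where "T a = t a (arc_flow W P arcs_of fbar)" for a
  define U where "U = (\<Union>w\<in>W. P w)"
  have finU: "finite U" unfolding U_def using finW finP by blast
  obtain f0 where f0: "xbar = od_arc_flow P arcs_of f0" using xbar_in unfolding od_flow_set_def by blast
  have dz: "delta arcs_of r b = 0" if "r \<in> U" "b \<notin> A" for r b
    using that arcs_in unfolding U_def delta_def by auto
  have flow_eq: "(\<lambda>b. \<Sum>w'\<in>W. xbar w' b) = arc_flow W P arcs_of fbar"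
  proof
    fix b
    show "(\<Sum>w'\<in>W. xbar w' b) = arc_flow W P arcs_of fbar b"
    proof (cases "b \<in> A")
      case True
      have "(\<Sum>w'\<in>W. xbar w' b) = (\<Sum>w'\<in>W. \<Sum>r\<in>P w'. delta arcs_of r b * fbar r)"
        using fbar_x True by simp
      also have "\<dots> = (\<Sum>r\<in>U. delta arcs_of r b * fbar r)"
        unfolding U_def by (rule sum.UNION_disjoint[symmetric]) (use finW finP disjP in auto)
      finally show ?thesis unfolding arc_flow_def U_def .
    next
      case False
      have "xbar w' b = 0" if "w' \<in> W" for w'
        unfolding f0 od_arc_flow_def using dz[OF _ False] that unfolding U_def
        by (intro sum.neutral) auto
      moreover have "arc_flow W P arcs_of fbar b = 0"
        unfolding arc_flow_def using dz[OF _ False] unfolding U_def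
        by (intro sum.neutral) auto
      ultimately show ?thesis by simp
    qed
  qed
  have cost: "path_cost A W P arcs_of t fbar r = (\<Sum>a\<in>A. delta arcs_of r a * T a)" for r
    unfolding path_cost_def T_def by simp
  have dnn: "0 \<le> delta arcs_of r a" "delta arcs_of r a \<le> 1" for r a
    unfolding delta_def by auto
  have Tnn: "a \<in> A \<Longrightarrow> 0 \<le> T a" for a unfolding T_def using t_nonneg by simp
  have main: "path_cost A W P arcs_of t fbar p \<le> (1 + \<kappa>) * path_cost A W P arcs_of t fbar q"
    if w0: "w0 \<in> W" and p: "p \<in> P w0" and q: "q \<in> P w0" and fp: "fbar p > 0" for w0 p q
  proof (cases "p = q")
    case True
    have "0 \<le> path_cost A W P arcs_of t fbar q" unfolding cost
      by (rule sum_nonneg) (use dnn Tnn in auto)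
    then show ?thesis using True kappa by (simp add: mult_le_cancel_right1 algebra_simps)
  next
    case pq: False
    define f' where "f' = fbar(p := 0, q := fbar q + fbar p)"
    have diff: "f' r - fbar r = (if r = q then fbar p else 0) + (if r = p then - fbar p else 0)" for r
      unfolding f'_def using pq by auto
    have notin: "p \<notin> P w \<and> q \<notin> P w" if "w \<in> W" "w \<noteq> w0" for w
      using disjP[OF that(1) w0 that(2)] p q by blast
    have f'feas: "f' \<in> feasible_flows W P Q"
    proof -
      have "f' r \<ge> 0" if "r \<in> U" for r
        using fbar_in that fp unfolding feasible_flows_def f'_def U_def by auto
      moreover have "(\<Sum>r\<in>P w. f' r) = Q w" if w: "w \<in> W" for w
      proof (cases "w = w0")
        case True
        have "(\<Sum>r\<in>P w. f' r) - (\<Sum>r\<in>P w. fbar r) = (\<Sum>r\<in>P w. f' r - fbar r)"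
          by (simp add: sum_subtractf)
        also have "\<dots> = 0" unfolding diff sum.distrib using True p q finP[OF w] by simp
        finally show ?thesis using fbar_in w unfolding feasible_flows_def by simp
      next
        case False
        have "(\<Sum>r\<in>P w. f' r) = (\<Sum>r\<in>P w. fbar r)"
          by (rule sum.cong) (use notin[OF w False] in \<open>auto simp: f'_def\<close>)
        then show ?thesis using fbar_in w unfolding feasible_flows_def by simp
      qed
      ultimately show ?thesis unfolding feasible_flows_def U_def by blast
    qed
    define x' where "x' = od_arc_flow P arcs_of f'"
    have x'in: "x' \<in> od_flow_set W P Q arcs_of" unfolding x'_def od_flow_set_def using f'feas by blast
    have xd: "x' w a - xbar w a = (if w = w0 then (delta arcs_of q a - delta arcs_of p a) * fbar p else 0)"
      if w: "w \<in> W" and a: "a \<in> A" for w a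
    proof -
      have "x' w a - xbar w a = (\<Sum>r\<in>P w. delta arcs_of r a * (f' r - fbar r))"
        unfolding x'_def od_arc_flow_def fbar_x[OF a w]
        by (simp add: sum_subtractf right_diff_distrib)
      also have "\<dots> = (if w = w0 then (delta arcs_of q a - delta arcs_of p a) * fbar p else 0)"
      proof (cases "w = w0")
        case True
        show ?thesis unfolding diff distrib_left sum.distrib using True p q finP[OF w]
          by (simp add: if_distrib left_diff_distrib cong: if_cong)
      next
        case False
        show ?thesis unfolding diff using notin[OF w False] False
          by (auto intro!: sum.neutral)
      qed
      finally show ?thesis .
    qed
    have "0 \<le> (\<Sum>a\<in>A. \<Sum>w\<in>W. lambar w a * T a * (x' w a - xbar w a))"
      using VI[OF x'in] unfolding flow_eq T_def .
    also have "\<dots> = (\<Sum>a\<in>A. lambar w0 a * T a * (delta arcs_of q a - delta arcs_of p a) * fbar p)"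
    proof (rule sum.cong[OF refl])
      fix a assume a: "a \<in> A"
      have "(\<Sum>w\<in>W. lambar w a * T a * (x' w a - xbar w a)) =
        (\<Sum>w\<in>W. if w = w0 then lambar w0 a * T a * (delta arcs_of q a - delta arcs_of p a) * fbar p else 0)"
        by (rule sum.cong[OF refl]) (simp add: xd a)
      also have "\<dots> = lambar w0 a * T a * (delta arcs_of q a - delta arcs_of p a) * fbar p"
        using w0 finW by simp
      finally show "(\<Sum>w\<in>W. lambar w a * T a * (x' w a - xbar w a)) =
        lambar w0 a * T a * (delta arcs_of q a - delta arcs_of p a) * fbar p" .
    qed
    also have "\<dots> = fbar p * ((\<Sum>a\<in>A. lambar w0 a * T a * delta arcs_of q a) - (\<Sum>a\<in>A. lambar w0 a * T a * delta arcs_of p a))"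
      by (simp add: sum_distrib_left sum_subtractf[symmetric] algebra_simps)
    finally have "(\<Sum>a\<in>A. lambar w0 a * T a * delta arcs_of p a) \<le> (\<Sum>a\<in>A. lambar w0 a * T a * delta arcs_of q a)"
      using fp by (simp add: zero_le_mult_iff)
    moreover have "(\<Sum>a\<in>A. lambar w0 a * T a * delta arcs_of q a) \<le> (\<Sum>a\<in>A. delta arcs_of q a * T a)"
    proof (rule sum_mono)
      fix a assume a: "a \<in> A"
      have "0 \<le> T a * delta arcs_of q a" using Tnn[OF a] dnn by simp
      then have "lambar w0 a * (T a * delta arcs_of q a) \<le> 1 * (T a * delta arcs_of q a)"
        using lam[OF w0 a] by (intro mult_right_mono) auto
      then show "lambar w0 a * T a * delta arcs_of q a \<le> delta arcs_of q a * T a" by (simp add: algebra_simps)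
    qed
    moreover have "(\<Sum>a\<in>A. delta arcs_of p a * T a) / (1 + \<kappa>) \<le> (\<Sum>a\<in>A. lambar w0 a * T a * delta arcs_of p a)"
    proof -
      have "(\<Sum>a\<in>A. delta arcs_of p a * T a) / (1 + \<kappa>) = (\<Sum>a\<in>A. 1 / (1 + \<kappa>) * (T a * delta arcs_of p a))"
        by (simp add: sum_divide_distrib algebra_simps)
      also have "\<dots> \<le> (\<Sum>a\<in>A. lambar w0 a * (T a * delta arcs_of p a))"
      proof (rule sum_mono)
        fix a assume a: "a \<in> A"
        have "0 \<le> T a * delta arcs_of p a" using Tnn[OF a] dnn by simp
        then show "1 / (1 + \<kappa>) * (T a * delta arcs_of p a) \<le> lambar w0 a * (T a * delta arcs_of p a)"
          using lam[OF w0 a] by (intro mult_right_mono) auto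
      qed
      finally show ?thesis by (simp add: algebra_simps)
    qed
    ultimately have "(\<Sum>a\<in>A. delta arcs_of p a * T a) / (1 + \<kappa>) \<le> (\<Sum>a\<in>A. delta arcs_of q a * T a)"
      by linarith
    then show ?thesis unfolding cost using kappa by (simp add: divide_le_eq algebra_simps)
  qed
  show ?thesis unfolding MSatUE_def
  proof (intro conjI ballI impI fbar_in)
    fix w p assume w: "w \<in> W" and p: "p \<in> P w" and fp: "0 < fbar p"
    have "finite ((\<lambda>p'. path_cost A W P arcs_of t fbar p') ` P w)" "(\<lambda>p'. path_cost A W P arcs_of t fbar p') ` P w \<noteq> {}"
      using finP[OF w] p by auto
    from Min_in[OF this] obtain q where q: "q \<in> P w"
      and "(MIN p'\<in>P w. path_cost A W P arcs_of t fbar p') = path_cost A W P arcs_of t fbar q" by auto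
    then show "path_cost A W P arcs_of t fbar p \<le> (1 + \<kappa>) * (MIN p'\<in>P w. path_cost A W P arcs_of t fbar p')"
      using main[OF w p q fp] by simp
  qed
qed

end
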